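(* Let $R$ be the ring of $2$-adic integers, $G=A_4$, $H=\langle a_1,a_2\rangle$ with $a_1=(1,2)(3,4)$, $a_2=(1,4)(2,3)$. Let $\delta_1,\delta_2,\delta_3$ be the linear characters of $H$ given by $\delta_1(a_1)=-1,\delta_1(a_2)=1$; $\delta_2(a_1)=1,\delta_2(a_2)=-1$; $\delta_3(a_1)=\delta_3(a_2)=-1$, viewed as rank-one $RH$-modules. Then each induced $R$-representation $\delta_i^G$ ($i=1,2,3$) of $G$ is irreducible and equivalent to the representation $\Gamma_2$ afforded by $M_2$. Moreover $\Gamma_2$ is equivalent to the monomial representation $a_1\mapsto\operatorname{diag}(-1,1,-1)$, $b\mapsto\left(\begin{smallmatrix}0&0&1\\1&0&0\\0&1&0\end{smallmatrix}\right)$ where $b=(1,2,3)$.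
   Context: Let $L$ be the free $R$-module with basis $e_1,\dots,e_4$ on which $G$ acts by permuting indices; $L_2=\{\sum\alpha_je_j:\alpha_j\in R,\ \sum\alpha_j\equiv0\pmod 2\}$, $L_0=R(e_1+e_2+e_3+e_4)$, $M_2=L_2/L_0$, an $RG$-module free of rank $3$ over $R$; $\Gamma_2$ is the $R$-representation it affords. Two $R$-representations are equivalent if their modules are isomorphic. *)

theory Defs
  imports "HOL-Analysis.Analysis"
begin

section \<open>The ring R of 2-adic integers, as the inverse limit of the rings Z/2^n Z\<close>

definition compat2 :: "(nat \<Rightarrow> int) \<Rightarrow> bool" where
  "compat2 x \<longleftrightarrow> (\<forall>n. x (Suc n) mod 2 ^ n = x n mod 2 ^ n)"

definition padic_rel :: "(nat \<Rightarrow> int) \<Rightarrow> (nat \<Rightarrow> int) \<Rightarrow> bool" where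
  "padic_rel x y \<longleftrightarrow> compat2 x \<and> compat2 y \<and> (\<forall>n. x n mod 2 ^ n = y n mod 2 ^ n)"

quotient_type padic2 = "nat \<Rightarrow> int" / partial: padic_rel
  unfolding part_equivp_def
proof (intro conjI allI)
  show "\<exists>x. padic_rel x x"
    by (rule exI[of _ "\<lambda>_. 0"]) (simp add: padic_rel_def compat2_def)
  fix x y
  show "padic_rel x y = (padic_rel x x \<and> padic_rel y y \<and> padic_rel x = padic_rel y)"
    unfolding padic_rel_def by (auto simp: fun_eq_iff)
qed

lemma compat2_add: "compat2 x \<Longrightarrow> compat2 y \<Longrightarrow> compat2 (\<lambda>n. x n + y n)"
  by (auto simp: compat2_def intro: mod_add_cong)
lemma compat2_mult: "compat2 x \<Longrightarrow> compat2 y \<Longrightarrow> compat2 (\<lambda>n. x n * y n)"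
  by (auto simp: compat2_def intro: mod_mult_cong)
lemma compat2_minus: "compat2 x \<Longrightarrow> compat2 (\<lambda>n. - x n)"
  by (auto simp: compat2_def intro: mod_minus_cong)
lemma compat2_diff: "compat2 x \<Longrightarrow> compat2 y \<Longrightarrow> compat2 (\<lambda>n. x n - y n)"
  by (auto simp: compat2_def intro: mod_diff_cong)
lemma compat2_const: "compat2 (\<lambda>n. c)"
  by (simp add: compat2_def)

instantiation padic2 :: comm_ring_1
begin

lift_definition zero_padic2 :: padic2 is "\<lambda>n. 0"
  by (simp add: padic_rel_def compat2_const)
lift_definition one_padic2 :: padic2 is "\<lambda>n. 1"
  by (simp add: padic_rel_def compat2_const)
lift_definition plus_padic2 :: "padic2 \<Rightarrow> padic2 \<Rightarrow> padic2" is "\<lambda>x y n. x n + y n"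
  by (auto simp: padic_rel_def compat2_add intro: mod_add_cong)
lift_definition times_padic2 :: "padic2 \<Rightarrow> padic2 \<Rightarrow> padic2" is "\<lambda>x y n. x n * y n"
  by (auto simp: padic_rel_def compat2_mult intro: mod_mult_cong)
lift_definition uminus_padic2 :: "padic2 \<Rightarrow> padic2" is "\<lambda>x n. - x n"
  by (auto simp: padic_rel_def compat2_minus intro: mod_minus_cong)
lift_definition minus_padic2 :: "padic2 \<Rightarrow> padic2 \<Rightarrow> padic2" is "\<lambda>x y n. x n - y n"
  by (auto simp: padic_rel_def compat2_diff intro: mod_diff_cong)

instance
proof
  fix a b c :: padic2
  show "a + b + c = a + (b + c)" by transfer (simp add: padic_rel_def compat2_add add.assoc)
  show "a + b = b + a" by transfer (simp add: padic_rel_def compat2_add add.commute)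
  show "0 + a = a" by transfer (simp add: padic_rel_def)
  show "- a + a = 0" by transfer (simp add: padic_rel_def compat2_add compat2_minus compat2_const)
  show "a - b = a + - b" by transfer (simp add: padic_rel_def compat2_add compat2_minus compat2_diff)
  show "a * b * c = a * (b * c)" by transfer (simp add: padic_rel_def compat2_mult mult.assoc)
  show "a * b = b * a" by transfer (simp add: padic_rel_def compat2_mult mult.commute)
  show "1 * a = a" by transfer (simp add: padic_rel_def)
  show "(a + b) * c = a * c + b * c" by transfer (simp add: padic_rel_def compat2_mult compat2_add algebra_simps)
  show "(0::padic2) \<noteq> 1" by transfer (auto simp: padic_rel_def compat2_const intro!: exI[of _ 1])
qed

end

datatype pt = P1 | P2 | P3 | P4

lemma UNIV_pt: "(UNIV :: pt set) = {P1, P2, P3, P4}"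
  using pt.exhaust by auto

instance pt :: finite
  by standard (simp add: UNIV_pt)

text \<open>Permutations are functions pt => pt; the product g h is composition g \<circ> h
  (apply h first).\<close>

definition A4 :: "(pt \<Rightarrow> pt) set" where
  "A4 = {p. p permutes (UNIV :: pt set) \<and> evenperm p}"

fun a1 :: "pt \<Rightarrow> pt" where
  "a1 P1 = P2" | "a1 P2 = P1" | "a1 P3 = P4" | "a1 P4 = P3"

fun a2 :: "pt \<Rightarrow> pt" where
  "a2 P1 = P4" | "a2 P4 = P1" | "a2 P2 = P3" | "a2 P3 = P2"

fun b :: "pt \<Rightarrow> pt" where
  "b P1 = P2" | "b P2 = P3" | "b P3 = P1" | "b P4 = P4"

definition H :: "(pt \<Rightarrow> pt) set" where
  "H = {id, a1, a2, a1 \<circ> a2}"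

definition is_rep :: "((pt \<Rightarrow> pt) \<Rightarrow> padic2 ^ 'n ^ 'n) \<Rightarrow> bool" where
  "is_rep \<rho> \<longleftrightarrow> \<rho> id = mat 1 \<and> (\<forall>g\<in>A4. \<forall>h\<in>A4. \<rho> (g \<circ> h) = \<rho> g ** \<rho> h)"

text \<open>Irreducible R-representation: R^n has no RG-submodule N that is R-pure
  (R^n/N torsion-free) other than 0 and R^n.\<close>
definition irreducible_rep :: "((pt \<Rightarrow> pt) \<Rightarrow> padic2 ^ 'n ^ 'n) \<Rightarrow> bool" where
  "irreducible_rep \<rho> \<longleftrightarrow>
     \<not> (\<exists>N :: (padic2 ^ 'n) set.
          0 \<in> N \<and> (\<forall>u\<in>N. \<forall>v\<in>N. u + v \<in> N) \<and> (\<forall>c. \<forall>u\<in>N. c *s u \<in> N) \<and>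
          (\<forall>g\<in>A4. \<forall>u\<in>N. \<rho> g *v u \<in> N) \<and>
          (\<forall>c u. c \<noteq> 0 \<longrightarrow> c *s u \<in> N \<longrightarrow> u \<in> N) \<and>
          N \<noteq> {0} \<and> N \<noteq> UNIV)"

definition lin_char :: "padic2 \<Rightarrow> padic2 \<Rightarrow> (pt \<Rightarrow> pt) \<Rightarrow> padic2" where
  "lin_char s1 s2 h =
     (if h = id then 1 else if h = a1 then s1 else if h = a2 then s2 else s1 * s2)"

definition delta1 :: "(pt \<Rightarrow> pt) \<Rightarrow> padic2" where "delta1 = lin_char (-1) 1"
definition delta2 :: "(pt \<Rightarrow> pt) \<Rightarrow> padic2" where "delta2 = lin_char 1 (-1)"
definition delta3 :: "(pt \<Rightarrow> pt) \<Rightarrow> padic2" where "delta3 = lin_char (-1) (-1)"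

definition transv :: "3 \<Rightarrow> (pt \<Rightarrow> pt)" where
  "transv i = (if i = 1 then id else if i = 2 then b else b \<circ> b)"

definition induced :: "((pt \<Rightarrow> pt) \<Rightarrow> padic2) \<Rightarrow> (pt \<Rightarrow> pt) \<Rightarrow> padic2 ^ 3 ^ 3" where
  "induced \<delta> g = (\<chi> i j. let h = inv (transv i) \<circ> g \<circ> transv j in if h \<in> H then \<delta> h else 0)"

text \<open>L = R^4 with basis e_P1..e_P4; g e_j = e_(g j), i.e. (g x)_k = x_(g^-1 k).\<close>
definition perm_act :: "(pt \<Rightarrow> pt) \<Rightarrow> padic2 ^ pt \<Rightarrow> padic2 ^ pt" where
  "perm_act g x = (\<chi> k. x $ inv g k)"

definition L2 :: "(padic2 ^ pt) set" where
  "L2 = {x. \<exists>c. (\<Sum>j\<in>UNIV. x $ j) = 2 * c}"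

definition L0 :: "(padic2 ^ pt) set" where
  "L0 = {c *s (\<chi> j. 1) | c. True}"

text \<open>sigma is equivalent to Gamma_2, i.e. the RG-module R^3 (via sigma) is isomorphic
  to M_2 = L_2/L_0: phi : R^3 -> L_2 is R-linear and induces an RG-isomorphism
  R^3 -> L_2/L_0.\<close>
definition equiv_Gamma2 :: "((pt \<Rightarrow> pt) \<Rightarrow> padic2 ^ 3 ^ 3) \<Rightarrow> bool" where
  "equiv_Gamma2 \<sigma> \<longleftrightarrow>
     (\<exists>\<phi> :: padic2 ^ 3 \<Rightarrow> padic2 ^ pt.
        (\<forall>u v. \<phi> (u + v) = \<phi> u + \<phi> v) \<and> (\<forall>c u. \<phi> (c *s u) = c *s \<phi> u) \<and>
        (\<forall>u. \<phi> u \<in> L2) \<and>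
        (\<forall>x\<in>L2. \<exists>u. x - \<phi> u \<in> L0) \<and>
        (\<forall>u. \<phi> u \<in> L0 \<longrightarrow> u = 0) \<and>
        (\<forall>g\<in>A4. \<forall>u. perm_act g (\<phi> u) - \<phi> (\<sigma> g *v u) \<in> L0))"

definition diagA :: "padic2 ^ 3 ^ 3" where
  "diagA = vector [vector [-1, 0, 0], vector [0, 1, 0], vector [0, 0, -1]]"

definition permB :: "padic2 ^ 3 ^ 3" where
  "permB = vector [vector [0, 0, 1], vector [1, 0, 0], vector [0, 1, 0]]"

end

theory Submission
  imports Defs
begin



lemma fun_pt_eq: "(f::pt \<Rightarrow> 'a) = g \<longleftrightarrow> f P1 = g P1 \<and> f P2 = g P2 \<and> f P3 = g P3 \<and> f P4 = g P4"
proof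
  assume "f P1 = g P1 \<and> f P2 = g P2 \<and> f P3 = g P3 \<and> f P4 = g P4"
  then show "f = g" by (intro ext, case_tac x) auto
qed simp

lemma all_pt: "(\<forall>k::pt. P k) \<longleftrightarrow> P P1 \<and> P P2 \<and> P P3 \<and> P P4"
  by (metis pt.exhaust)

lemma sum_pt: "sum f (UNIV::pt set) = f P1 + f P2 + f P3 + f P4"
  by (simp add: UNIV_pt add.assoc)

definition pm :: "pt \<Rightarrow> pt \<Rightarrow> pt \<Rightarrow> pt \<Rightarrow> pt \<Rightarrow> pt" where
  "pm w x y z p = (case p of P1 \<Rightarrow> w | P2 \<Rightarrow> x | P3 \<Rightarrow> y | P4 \<Rightarrow> z)"

lemma pm_simps[simp]: "pm w x y z P1 = w" "pm w x y z P2 = x" "pm w x y z P3 = y" "pm w x y z P4 = z"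
  by (simp_all add: pm_def)

lemma fun_pm: "(f::pt \<Rightarrow> pt) = pm (f P1) (f P2) (f P3) (f P4)"
  by (simp add: fun_pt_eq)

definition E :: "(pt \<Rightarrow> pt) set" where
  "E = {id, a1, a2, a1 \<circ> a2, b, b \<circ> b, b \<circ> a1, b \<circ> a2, b \<circ> (a1 \<circ> a2),
        (b \<circ> b) \<circ> a1, (b \<circ> b) \<circ> a2, (b \<circ> b) \<circ> (a1 \<circ> a2)}"

lemma A4_comp: "g \<in> A4 \<Longrightarrow> h \<in> A4 \<Longrightarrow> g \<circ> h \<in> A4"
  unfolding A4_def
  by (auto intro: permutes_compose simp: evenperm_comp permutes_imp_permutation)

lemma A4_id: "id \<in> A4"
  unfolding A4_def by simp

lemma A4_tt: "x \<noteq> y \<Longrightarrow> z \<noteq> w \<Longrightarrow> Transposition.transpose x y \<circ> Transposition.transpose z w \<in> A4"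
  unfolding A4_def
  by (auto intro!: permutes_compose permutes_swap_id simp: evenperm_comp permutation_swap_id evenperm_swap)

lemma a1_A4: "a1 \<in> A4"
proof -
  have "a1 = Transposition.transpose P1 P2 \<circ> Transposition.transpose P3 P4"
    by (simp add: fun_pt_eq transpose_def)
  then show ?thesis by (metis A4_tt pt.distinct)
qed

lemma b_A4: "b \<in> A4"
proof -
  have "b = Transposition.transpose P1 P2 \<circ> Transposition.transpose P2 P3"
    by (simp add: fun_pt_eq transpose_def)
  then show ?thesis by (metis A4_tt pt.distinct)
qed

lemma a2_word: "a2 = b \<circ> (a1 \<circ> (b \<circ> b))"
  by (simp add: fun_pt_eq)

lemma a2_A4: "a2 \<in> A4"
  unfolding a2_word by (intro A4_comp a1_A4 b_A4)

lemma E_sub: "E \<subseteq> A4"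
  unfolding E_def using A4_id a1_A4 a2_A4 b_A4 by (auto intro!: A4_comp)

lemma inj_cases:
  assumes "inj (p::pt \<Rightarrow> pt)"
  shows "p \<in> E \<or> Transposition.transpose P1 P2 \<circ> p \<in> E"
proof -
  have d: "p P1 \<noteq> p P2" "p P1 \<noteq> p P3" "p P1 \<noteq> p P4" "p P2 \<noteq> p P3" "p P2 \<noteq> p P4" "p P3 \<noteq> p P4"
    using assms by (auto dest: injD)
  have e: "p = pm (p P1) (p P2) (p P3) (p P4)" by (rule fun_pm)
  show ?thesis
    using d
    apply (subst (1 2) e)
    apply (cases "p P1"; cases "p P2"; cases "p P3"; cases "p P4")
    apply (simp_all add: E_def fun_pt_eq transpose_def)
    done
qed

lemma A4_sub: "A4 \<subseteq> E"
proof
  fix p assume p: "p \<in> A4"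
  then have pp: "p permutes UNIV" and ev: "evenperm p" by (auto simp: A4_def)
  have "inj p" using pp by (simp add: permutes_inj)
  show "p \<in> E"
  proof (rule ccontr)
    assume "p \<notin> E"
    then have "Transposition.transpose P1 P2 \<circ> p \<in> E" using inj_cases[OF \<open>inj p\<close>] by blast
    then have "evenperm (Transposition.transpose P1 P2 \<circ> p)" using E_sub by (auto simp: A4_def)
    moreover have "permutation p" using pp by (simp add: permutes_imp_permutation)
    ultimately show False using ev by (simp add: evenperm_comp permutation_swap_id evenperm_swap)
  qed
qed

lemma A4_E: "A4 = E" using A4_sub E_sub by blast



lemma two_torsion_aux:
  assumes c: "compat2 x" and h: "\<forall>n. (x n + x n) mod 2 ^ n = 0 mod (2::int) ^ n"
  shows "x n mod 2 ^ n = 0"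
proof -
  have "(x (Suc n) + x (Suc n)) mod 2 ^ Suc n = 0" using spec[OF h, of "Suc n"] by simp
  then have "(2::int) ^ Suc n dvd x (Suc n) + x (Suc n)" by (simp only: dvd_eq_mod_eq_0)
  then obtain k where k: "x (Suc n) + x (Suc n) = 2 ^ Suc n * k" by (elim dvdE)
  have "2 * x (Suc n) = 2 * (2 ^ n * k)" using k by (metis power_Suc mult.assoc mult_2)
  then have "x (Suc n) = 2 ^ n * k" by simp
  then have "x (Suc n) mod 2 ^ n = 0" by simp
  then show ?thesis using c by (simp add: compat2_def)
qed

lemma two_torsion: fixes c :: padic2 assumes "c + c = 0" shows "c = 0"
  using assms
  apply transfer
  subgoal for c
    unfolding padic_rel_def
    using two_torsion_aux[of c] by (simp add: compat2_const)
  done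

lemma two_nz: "(2::padic2) \<noteq> 0"
  using two_torsion[of 1] by (auto simp: one_add_one)



lemma A4_bij: "g \<in> A4 \<Longrightarrow> bij g"
  unfolding A4_def by (auto intro: permutes_bij)

lemma inv_pt:
  assumes "bij (g::pt \<Rightarrow> pt)"
  shows "inv g k = (if g P1 = k then P1 else if g P2 = k then P2 else if g P3 = k then P3 else P4)"
proof -
  from assms obtain j where j: "g j = k" unfolding bij_def surj_def by metis
  have inj: "inj g" using assms by (rule bij_is_inj)
  have inv: "inv g k = j" using inj j by (metis inv_f_f)
  show ?thesis using j inj by (cases j) (auto simp: inv dest: injD)
qed

lemma perm_act_bij:
  "bij g \<Longrightarrow> perm_act g x = (\<chi> k. x $ (if g P1 = k then P1 else if g P2 = k then P2 else if g P3 = k then P3 else P4))"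
  unfolding perm_act_def using inv_pt by simp

lemma perm_act_comp: "bij g \<Longrightarrow> bij h \<Longrightarrow> perm_act (g \<circ> h) x = perm_act g (perm_act h x)"
  unfolding perm_act_def by (simp add: o_inv_distrib)

lemma perm_act_diff: "perm_act g (x - y) = perm_act g x - perm_act g y"
  unfolding perm_act_def by (simp add: vec_eq_iff)

lemma L0_iff: "x \<in> L0 \<longleftrightarrow> (\<forall>k. x $ k = x $ P1)"
proof
  assume "x \<in> L0" then show "\<forall>k. x $ k = x $ P1" by (auto simp: L0_def)
next
  assume h: "\<forall>k. x $ k = x $ P1"
  have "x = (x $ P1) *s (\<chi> j. 1)" using h by (simp add: vec_eq_iff)
  then show "x \<in> L0" unfolding L0_def by blast
qed

lemma L0_perm: "x \<in> L0 \<Longrightarrow> perm_act g x \<in> L0"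
  unfolding L0_iff perm_act_def by (metis vec_lambda_beta)

lemma L0_add: "x \<in> L0 \<Longrightarrow> y \<in> L0 \<Longrightarrow> x + y \<in> L0"
  unfolding L0_iff by (metis vector_add_component)
lemma L0_diff: "x \<in> L0 \<Longrightarrow> y \<in> L0 \<Longrightarrow> x - y \<in> L0"
  unfolding L0_iff by (metis vector_minus_component)

lemma rep_from_equiv:
  fixes \<rho> :: "(pt \<Rightarrow> pt) \<Rightarrow> padic2 ^ 3 ^ 3" and \<phi> :: "padic2 ^ 3 \<Rightarrow> padic2 ^ pt"
  assumes id: "\<rho> id = mat 1"
    and add: "\<And>u v. \<phi> (u + v) = \<phi> u + \<phi> v"
    and inj: "\<And>u. \<phi> u \<in> L0 \<Longrightarrow> u = 0"
    and eqv: "\<And>g u. g \<in> A4 \<Longrightarrow> perm_act g (\<phi> u) - \<phi> (\<rho> g *v u) \<in> L0"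
  shows "is_rep \<rho>"
  unfolding is_rep_def
proof (intro conjI id ballI)
  fix g h assume g: "g \<in> A4" and h: "h \<in> A4"
  have diff: "\<phi> (u - v) = \<phi> u - \<phi> v" for u v
    using add[of "u - v" v] by (simp add: algebra_simps)
  show "\<rho> (g \<circ> h) = \<rho> g ** \<rho> h"
    unfolding matrix_eq
  proof
    fix u
    have A1: "perm_act (g \<circ> h) (\<phi> u) - \<phi> (\<rho> (g \<circ> h) *v u) \<in> L0"
      using eqv A4_comp[OF g h] by blast
    have A2: "perm_act g (perm_act h (\<phi> u)) - perm_act g (\<phi> (\<rho> h *v u)) \<in> L0"
      using L0_perm[OF eqv[OF h, of u], of g] by (simp add: perm_act_diff)
    have A3: "perm_act g (\<phi> (\<rho> h *v u)) - \<phi> (\<rho> g *v (\<rho> h *v u)) \<in> L0"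
      using eqv[OF g] by blast
    have "(perm_act g (perm_act h (\<phi> u)) - perm_act g (\<phi> (\<rho> h *v u))) +
          (perm_act g (\<phi> (\<rho> h *v u)) - \<phi> (\<rho> g *v (\<rho> h *v u))) -
          (perm_act (g \<circ> h) (\<phi> u) - \<phi> (\<rho> (g \<circ> h) *v u)) \<in> L0"
      by (rule L0_diff[OF L0_add[OF A2 A3] A1])
    moreover have "perm_act (g \<circ> h) (\<phi> u) = perm_act g (perm_act h (\<phi> u))"
      using A4_bij[OF g] A4_bij[OF h] by (rule perm_act_comp)
    ultimately have "\<phi> (\<rho> (g \<circ> h) *v u) - \<phi> (\<rho> g *v (\<rho> h *v u)) \<in> L0"
      by (simp add: algebra_simps)
    then have "\<phi> (\<rho> (g \<circ> h) *v u - \<rho> g *v (\<rho> h *v u)) \<in> L0" by (simp add: diff)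
    then have "\<rho> (g \<circ> h) *v u - \<rho> g *v (\<rho> h *v u) = 0" by (rule inj)
    then show "\<rho> (g \<circ> h) *v u = (\<rho> g ** \<rho> h) *v u"
      by (simp add: matrix_vector_mul_assoc)
  qed
qed

lemma axis_permB: "permB *v axis 1 1 = axis 2 1" "permB *v axis 2 1 = axis 3 1" "permB *v axis 3 1 = axis 1 1"
  by (simp_all add: permB_def vec_eq_iff forall_3 matrix_vector_mult_def sum_3 axis_def)

lemma vec3_axis: "(v::padic2^3) = v$1 *s axis 1 1 + v$2 *s axis 2 1 + v$3 *s axis 3 1"
  by (simp add: vec_eq_iff forall_3 axis_def)

lemma irred_crit:
  fixes \<rho> :: "(pt \<Rightarrow> pt) \<Rightarrow> padic2 ^ 3 ^ 3"
  assumes two: "(2::padic2) \<noteq> 0"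
    and proj: "\<And>k. \<exists>h\<in>A4. \<forall>v. \<rho> h *v v + v = (v$k + v$k) *s axis k 1"
    and bA: "b \<in> A4" and rb: "\<rho> b = permB"
  shows "irreducible_rep \<rho>"
  unfolding irreducible_rep_def
proof (rule notI, elim exE conjE)
  fix N :: "(padic2 ^ 3) set"
  assume z: "0 \<in> N" and ad0: "\<forall>u\<in>N. \<forall>v\<in>N. u + v \<in> N" and sm0: "\<forall>c. \<forall>u\<in>N. c *s u \<in> N"
    and inv0: "\<forall>g\<in>A4. \<forall>u\<in>N. \<rho> g *v u \<in> N"
    and pure0: "\<forall>c u. c \<noteq> 0 \<longrightarrow> c *s u \<in> N \<longrightarrow> u \<in> N"
    and n0: "N \<noteq> {0}" and nU: "N \<noteq> UNIV"
  have ad: "\<And>u v. u\<in>N \<Longrightarrow> v\<in>N \<Longrightarrow> u + v \<in> N" using ad0 by blast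
  have sm: "\<And>c u. u\<in>N \<Longrightarrow> c *s u \<in> N" using sm0 by blast
  have inv: "\<And>g u. g\<in>A4 \<Longrightarrow> u\<in>N \<Longrightarrow> \<rho> g *v u \<in> N" using inv0 by blast
  have pure: "\<And>c u. c \<noteq> 0 \<Longrightarrow> c *s u \<in> N \<Longrightarrow> u \<in> N" using pure0 by blast
  obtain u where uN: "u \<in> N" and u0: "u \<noteq> 0" using n0 z by blast
  obtain k where uk: "u $ k \<noteq> 0" using u0 by (auto simp: vec_eq_iff)
  obtain h where hA: "h \<in> A4" and hp: "\<And>v. \<rho> h *v v + v = (v$k + v$k) *s axis k 1" using proj by blast
  have "(u$k + u$k) *s axis k 1 \<in> N" using hp[of u] ad[OF inv[OF hA uN] uN] by simp
  moreover have "(u$k + u$k) *s axis k 1 = 2 *s ((u$k) *s axis k 1)"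
    by (metis vector_smult_assoc mult_2)
  ultimately have "2 *s ((u$k) *s axis k 1) \<in> N" by simp
  then have "(u$k) *s axis k 1 \<in> N" using pure two by blast
  then have ak: "axis k 1 \<in> N" using pure uk by blast
  have step: "axis i 1 \<in> N \<Longrightarrow> permB *v axis i 1 \<in> N" for i
    using inv[OF bA] rb by metis
  have all: "axis 1 1 \<in> N \<and> axis 2 1 \<in> N \<and> axis 3 1 \<in> N"
  proof -
    have "k = 1 \<or> k = 2 \<or> k = 3" by (rule exhaust_3)
    then show ?thesis using ak step[of 1] step[of 2] step[of 3] unfolding axis_permB by blast
  qed
  have "v \<in> N" for v
    using all by (subst vec3_axis) (intro ad sm; simp)
  then show False using nU by blast
qed

lemma equiv_cong: "(\<And>g. g \<in> A4 \<Longrightarrow> \<sigma> g = \<tau> g) \<Longrightarrow> equiv_Gamma2 \<tau> \<Longrightarrow> equiv_Gamma2 \<sigma>"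
  unfolding equiv_Gamma2_def by simp

lemma inv_b: "inv b = b \<circ> b"
  by (rule inv_unique_comp) (simp_all add: fun_pt_eq)
lemma inv_bb: "inv (b \<circ> b) = b"
  by (rule inv_unique_comp) (simp_all add: fun_pt_eq)

lemma transv_simps: "transv 1 = id" "transv 2 = b" "transv 3 = b \<circ> b"
  by (simp_all add: transv_def)

definition phi1 :: "padic2 ^ 3 \<Rightarrow> padic2 ^ pt" where
  "phi1 u = (\<chi> k. case k of P1 \<Rightarrow> u$1 | P2 \<Rightarrow> u$2 | P3 \<Rightarrow> u$3 | P4 \<Rightarrow> u$1 + u$2 + u$3)"

lemmas comp_simps = induced_def matrix_vector_mult_def sum_3 transv_simps inv_b inv_bb H_def fun_pt_eq
   lin_char_def L0_iff all_pt

lemma eqv1: assumes "g \<in> E" "bij g"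
  shows "perm_act g (phi1 u) - phi1 (induced delta1 g *v u) \<in> L0"
  unfolding perm_act_bij[OF assms(2)]
  using assms(1) unfolding E_def
  apply (simp only: insert_iff empty_iff)
  apply (elim disjE)
  apply (simp_all add: comp_simps phi1_def delta1_def algebra_simps)
  done

definition phi2 :: "padic2 ^ 3 \<Rightarrow> padic2 ^ pt" where
  "phi2 u = (\<chi> k. case k of P1 \<Rightarrow> u$1 + u$3 | P2 \<Rightarrow> u$1 + u$2 | P3 \<Rightarrow> u$2 + u$3 | P4 \<Rightarrow> 0)"

definition phi3 :: "padic2 ^ 3 \<Rightarrow> padic2 ^ pt" where
  "phi3 u = (\<chi> k. case k of P1 \<Rightarrow> u$1 + u$2 | P2 \<Rightarrow> u$2 + u$3 | P3 \<Rightarrow> u$1 + u$3 | P4 \<Rightarrow> 0)"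

lemma eqv2: assumes "g \<in> E" "bij g"
  shows "perm_act g (phi2 u) - phi2 (induced delta2 g *v u) \<in> L0"
  unfolding perm_act_bij[OF assms(2)]
  using assms(1) unfolding E_def
  apply (simp only: insert_iff empty_iff)
  apply (elim disjE)
  apply (simp_all add: comp_simps phi2_def delta2_def algebra_simps)
  done

lemma eqv3: assumes "g \<in> E" "bij g"
  shows "perm_act g (phi3 u) - phi3 (induced delta3 g *v u) \<in> L0"
  unfolding perm_act_bij[OF assms(2)]
  using assms(1) unfolding E_def
  apply (simp only: insert_iff empty_iff)
  apply (elim disjE)
  apply (simp_all add: comp_simps phi3_def delta3_def algebra_simps)
  done


lemma phi1_add: "phi1 (u + v) = phi1 u + phi1 v"
  by (simp add: phi1_def vec_eq_iff all_pt)
lemma phi2_add: "phi2 (u + v) = phi2 u + phi2 v"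
  by (simp add: phi2_def vec_eq_iff all_pt)
lemma phi3_add: "phi3 (u + v) = phi3 u + phi3 v"
  by (simp add: phi3_def vec_eq_iff all_pt)
lemma phi1_smult: "phi1 (c *s u) = c *s phi1 u"
  by (simp add: phi1_def vec_eq_iff all_pt algebra_simps)
lemma phi2_smult: "phi2 (c *s u) = c *s phi2 u"
  by (simp add: phi2_def vec_eq_iff all_pt algebra_simps)
lemma phi3_smult: "phi3 (c *s u) = c *s phi3 u"
  by (simp add: phi3_def vec_eq_iff all_pt algebra_simps)

lemma phi1_L2: "phi1 u \<in> L2"
  unfolding L2_def mem_Collect_eq by (rule exI[of _ "u$1 + u$2 + u$3"]) (simp add: phi1_def sum_pt algebra_simps)
lemma phi2_L2: "phi2 u \<in> L2"
  unfolding L2_def mem_Collect_eq by (rule exI[of _ "u$1 + u$2 + u$3"]) (simp add: phi2_def sum_pt algebra_simps)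
lemma phi3_L2: "phi3 u \<in> L2"
  unfolding L2_def mem_Collect_eq by (rule exI[of _ "u$1 + u$2 + u$3"]) (simp add: phi3_def sum_pt algebra_simps)

lemma phi1_surj: assumes "x \<in> L2" shows "\<exists>u. x - phi1 u \<in> L0"
proof -
  obtain c where h: "x$P1 + x$P2 + x$P3 + x$P4 = 2 * c" using assms by (auto simp: L2_def sum_pt)
  have h': "x$P1 = c + c - x$P2 - x$P3 - x$P4" using h by (simp add: algebra_simps)
  show ?thesis
    apply (rule exI[of _ "vector [x$P1 - c + x$P4, x$P2 - c + x$P4, x$P3 - c + x$P4]"])
    apply (simp add: L0_iff all_pt phi1_def)
    using h' by (simp add: algebra_simps)
qed

lemma phi2_surj: assumes "x \<in> L2" shows "\<exists>u. x - phi2 u \<in> L0"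
proof -
  obtain c where h: "x$P1 + x$P2 + x$P3 + x$P4 = 2 * c" using assms by (auto simp: L2_def sum_pt)
  have h': "x$P1 = c + c - x$P2 - x$P3 - x$P4" using h by (simp add: algebra_simps)
  define s where "s = c - 2 * x$P4"
  show ?thesis
    apply (rule exI[of _ "vector [s - (x$P3 - x$P4), s - (x$P1 - x$P4), s - (x$P2 - x$P4)]"])
    apply (simp add: L0_iff all_pt phi2_def s_def)
    using h' by (simp add: algebra_simps)
qed

lemma phi3_surj: assumes "x \<in> L2" shows "\<exists>u. x - phi3 u \<in> L0"
proof -
  obtain c where h: "x$P1 + x$P2 + x$P3 + x$P4 = 2 * c" using assms by (auto simp: L2_def sum_pt)
  have h': "x$P1 = c + c - x$P2 - x$P3 - x$P4" using h by (simp add: algebra_simps)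
  define s where "s = c - 2 * x$P4"
  show ?thesis
    apply (rule exI[of _ "vector [s - (x$P2 - x$P4), s - (x$P3 - x$P4), s - (x$P1 - x$P4)]"])
    apply (simp add: L0_iff all_pt phi3_def s_def)
    using h' by (simp add: algebra_simps)
qed

lemma two_torsion2: "2 * (c::padic2) = 0 \<Longrightarrow> c = 0"
  using two_torsion[of c] by (metis mult_2)

lemma phi1_inj: assumes "phi1 u \<in> L0" shows "u = 0"
proof -
  have all: "\<forall>k. phi1 u $ k = phi1 u $ P1" using assms L0_iff by blast
  have e1: "u$2 = u$1" using all[rule_format, of P2] by (simp add: phi1_def)
  have e2: "u$3 = u$1" using all[rule_format, of P3] by (simp add: phi1_def)
  have e3: "u$1 + u$2 + u$3 = u$1" using all[rule_format, of P4] by (simp add: phi1_def)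
  have "2 * u$1 = 0" using e3 unfolding e1 e2 by simp
  then have z: "u$1 = 0" by (rule two_torsion2)
  show ?thesis using e1 e2 z by (simp add: vec_eq_iff forall_3)
qed

lemma phi2_inj: assumes "phi2 u \<in> L0" shows "u = 0"
proof -
  have all: "\<forall>k. phi2 u $ k = phi2 u $ P1" using assms L0_iff by blast
  have e1: "u$1 + u$2 = u$1 + u$3" using all[rule_format, of P2] by (simp add: phi2_def)
  have e2: "u$2 + u$3 = u$1 + u$3" using all[rule_format, of P3] by (simp add: phi2_def)
  have e3: "0 = u$1 + u$3" using all[rule_format, of P4] by (simp add: phi2_def)
  have a: "u$3 = u$2" using e1 by simp
  have c: "u$2 = u$1" using e2 by simp
  have "2 * u$1 = 0" using e3 unfolding a c by simp
  then have z: "u$1 = 0" by (rule two_torsion2)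
  then show ?thesis using a c by (simp add: vec_eq_iff forall_3)
qed

lemma phi3_inj: assumes "phi3 u \<in> L0" shows "u = 0"
proof -
  have all: "\<forall>k. phi3 u $ k = phi3 u $ P1" using assms L0_iff by blast
  have e1: "u$2 + u$3 = u$1 + u$2" using all[rule_format, of P2] by (simp add: phi3_def)
  have e2: "u$1 + u$3 = u$1 + u$2" using all[rule_format, of P3] by (simp add: phi3_def)
  have e3: "0 = u$1 + u$2" using all[rule_format, of P4] by (simp add: phi3_def)
  have c: "u$3 = u$2" using e2 by simp
  have a: "u$2 = u$1" using e1 unfolding c by (simp add: add.commute)
  have "2 * u$1 = 0" using e3 unfolding a by simp
  then have z: "u$1 = 0" by (rule two_torsion2)
  then show ?thesis using a c by (simp add: vec_eq_iff forall_3)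
qed

lemma bbb: "b \<circ> b \<circ> b = id" "b \<circ> (b \<circ> b) = id"
  by (simp_all add: fun_pt_eq)

lemma induced_id: "induced (lin_char s t) id = mat 1"
  by (simp add: comp_simps vec_eq_iff forall_3 mat_def bbb)

lemma induced_b: "induced (lin_char s t) b = permB"
  by (simp add: comp_simps vec_eq_iff forall_3 permB_def bbb)

lemma induced3_a1: "induced delta3 a1 = diagA"
  by (simp add: comp_simps vec_eq_iff forall_3 diagA_def delta3_def)


lemma a1a2_A4: "a1 \<circ> a2 \<in> A4" by (intro A4_comp a1_A4 a2_A4)

lemma proj1: "\<exists>h\<in>A4. \<forall>v. induced delta1 h *v v + v = (v$k + v$k) *s axis k 1"
proof -
  have "k = 1 \<or> k = 2 \<or> k = 3" by (rule exhaust_3)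
  then show ?thesis
  proof (elim disjE)
    assume k: "k = 1"
    show ?thesis using a1_A4 a2_A4 a1a2_A4 by (intro bexI[of _ "a2"]) (simp_all add: k vec_eq_iff forall_3 comp_simps axis_def delta1_def)
  next
    assume k: "k = 2"
    show ?thesis using a1_A4 a2_A4 a1a2_A4 by (intro bexI[of _ "a1 \<circ> a2"]) (simp_all add: k vec_eq_iff forall_3 comp_simps axis_def delta1_def)
  next
    assume k: "k = 3"
    show ?thesis using a1_A4 a2_A4 a1a2_A4 by (intro bexI[of _ "a1"]) (simp_all add: k vec_eq_iff forall_3 comp_simps axis_def delta1_def)
  qed
qed

lemma eqv1': "g \<in> A4 \<Longrightarrow> perm_act g (phi1 u) - phi1 (induced delta1 g *v u) \<in> L0"
  using eqv1 A4_E A4_bij by blast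

lemma equiv1: "equiv_Gamma2 (induced delta1)"
  unfolding equiv_Gamma2_def
  apply (rule exI[of _ phi1])
  apply (intro conjI allI ballI impI)
  apply (auto simp: phi1_add phi1_smult phi1_L2 intro: phi1_surj phi1_inj eqv1')
  done

lemma rep1: "is_rep (induced delta1)"
proof -
  have "induced delta1 id = mat 1" by (simp add: delta1_def induced_id)
  then show ?thesis
    by (rule rep_from_equiv[of "induced delta1" phi1]) (auto simp: phi1_add intro: phi1_inj eqv1')
qed

lemma irr1: "irreducible_rep (induced delta1)"
  by (rule irred_crit[OF two_nz proj1 b_A4]) (simp add: delta1_def induced_b)

lemma proj2: "\<exists>h\<in>A4. \<forall>v. induced delta2 h *v v + v = (v$k + v$k) *s axis k 1"
proof -
  have "k = 1 \<or> k = 2 \<or> k = 3" by (rule exhaust_3)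
  then show ?thesis
  proof (elim disjE)
    assume k: "k = 1"
    show ?thesis using a1_A4 a2_A4 a1a2_A4 by (intro bexI[of _ "a1"]) (simp_all add: k vec_eq_iff forall_3 comp_simps axis_def delta2_def)
  next
    assume k: "k = 2"
    show ?thesis using a1_A4 a2_A4 a1a2_A4 by (intro bexI[of _ "a2"]) (simp_all add: k vec_eq_iff forall_3 comp_simps axis_def delta2_def)
  next
    assume k: "k = 3"
    show ?thesis using a1_A4 a2_A4 a1a2_A4 by (intro bexI[of _ "a1 \<circ> a2"]) (simp_all add: k vec_eq_iff forall_3 comp_simps axis_def delta2_def)
  qed
qed

lemma eqv2': "g \<in> A4 \<Longrightarrow> perm_act g (phi2 u) - phi2 (induced delta2 g *v u) \<in> L0"
  using eqv2 A4_E A4_bij by blast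

lemma equiv2: "equiv_Gamma2 (induced delta2)"
  unfolding equiv_Gamma2_def
  apply (rule exI[of _ phi2])
  apply (intro conjI allI ballI impI)
  apply (auto simp: phi2_add phi2_smult phi2_L2 intro: phi2_surj phi2_inj eqv2')
  done

lemma rep2: "is_rep (induced delta2)"
proof -
  have "induced delta2 id = mat 1" by (simp add: delta2_def induced_id)
  then show ?thesis
    by (rule rep_from_equiv[of "induced delta2" phi2]) (auto simp: phi2_add intro: phi2_inj eqv2')
qed

lemma irr2: "irreducible_rep (induced delta2)"
  by (rule irred_crit[OF two_nz proj2 b_A4]) (simp add: delta2_def induced_b)

lemma proj3: "\<exists>h\<in>A4. \<forall>v. induced delta3 h *v v + v = (v$k + v$k) *s axis k 1"
proof -
  have "k = 1 \<or> k = 2 \<or> k = 3" by (rule exhaust_3)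
  then show ?thesis
  proof (elim disjE)
    assume k: "k = 1"
    show ?thesis using a1_A4 a2_A4 a1a2_A4 by (intro bexI[of _ "a1 \<circ> a2"]) (simp_all add: k vec_eq_iff forall_3 comp_simps axis_def delta3_def)
  next
    assume k: "k = 2"
    show ?thesis using a1_A4 a2_A4 a1a2_A4 by (intro bexI[of _ "a1"]) (simp_all add: k vec_eq_iff forall_3 comp_simps axis_def delta3_def)
  next
    assume k: "k = 3"
    show ?thesis using a1_A4 a2_A4 a1a2_A4 by (intro bexI[of _ "a2"]) (simp_all add: k vec_eq_iff forall_3 comp_simps axis_def delta3_def)
  qed
qed

lemma eqv3': "g \<in> A4 \<Longrightarrow> perm_act g (phi3 u) - phi3 (induced delta3 g *v u) \<in> L0"
  using eqv3 A4_E A4_bij by blast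

lemma equiv3: "equiv_Gamma2 (induced delta3)"
  unfolding equiv_Gamma2_def
  apply (rule exI[of _ phi3])
  apply (intro conjI allI ballI impI)
  apply (auto simp: phi3_add phi3_smult phi3_L2 intro: phi3_surj phi3_inj eqv3')
  done

lemma rep3: "is_rep (induced delta3)"
proof -
  have "induced delta3 id = mat 1" by (simp add: delta3_def induced_id)
  then show ?thesis
    by (rule rep_from_equiv[of "induced delta3" phi3]) (auto simp: phi3_add intro: phi3_inj eqv3')
qed

lemma irr3: "irreducible_rep (induced delta3)"
  by (rule irred_crit[OF two_nz proj3 b_A4]) (simp add: delta3_def induced_b)

lemma agree:
  assumes rs: "is_rep \<sigma>" and rt: "is_rep \<tau>" and ea: "\<sigma> a1 = \<tau> a1" and eb: "\<sigma> b = \<tau> b"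
    and g: "g \<in> A4"
  shows "\<sigma> g = \<tau> g"
proof -
  have comp: "\<sigma> (x \<circ> y) = \<tau> (x \<circ> y)" if "x \<in> A4" "y \<in> A4" "\<sigma> x = \<tau> x" "\<sigma> y = \<tau> y" for x y
    using rs rt that unfolding is_rep_def by simp
  have i: "\<sigma> id = \<tau> id" using rs rt unfolding is_rep_def by simp
  have bb: "\<sigma> (b \<circ> b) = \<tau> (b \<circ> b)" using comp b_A4 eb by blast
  have bbA: "b \<circ> b \<in> A4" using A4_comp b_A4 by blast
  have x1: "\<sigma> (a1 \<circ> (b \<circ> b)) = \<tau> (a1 \<circ> (b \<circ> b))" using comp[OF a1_A4 bbA ea bb] .
  have x1A: "a1 \<circ> (b \<circ> b) \<in> A4" using A4_comp a1_A4 bbA by blast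
  have e2: "\<sigma> a2 = \<tau> a2" unfolding a2_word using comp[OF b_A4 x1A eb x1] .
  have e12: "\<sigma> (a1 \<circ> a2) = \<tau> (a1 \<circ> a2)" using comp[OF a1_A4 a2_A4 ea e2] .
  have all: "\<sigma> x = \<tau> x" if "x \<in> E" for x
    using that unfolding E_def
    using i ea e2 e12 eb bb comp[OF b_A4 a1_A4 eb ea] comp[OF b_A4 a2_A4 eb e2]
      comp[OF b_A4 a1a2_A4 eb e12] comp[OF bbA a1_A4 bb ea] comp[OF bbA a2_A4 bb e2]
      comp[OF bbA a1a2_A4 bb e12]
    by blast
  show ?thesis using all g A4_E by blast
qed

theorem mainTheorem6:
  shows "(\<forall>\<delta> \<in> {delta1, delta2, delta3}.
            is_rep (induced \<delta>) \<and> irreducible_rep (induced \<delta>) \<and> equiv_Gamma2 (induced \<delta>))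
       \<and> (\<exists>\<sigma>. is_rep \<sigma> \<and> \<sigma> a1 = diagA \<and> \<sigma> b = permB)
       \<and> (\<forall>\<sigma>. is_rep \<sigma> \<and> \<sigma> a1 = diagA \<and> \<sigma> b = permB \<longrightarrow> equiv_Gamma2 \<sigma>)"
proof (intro conjI)
  show "\<forall>\<delta> \<in> {delta1, delta2, delta3}.
            is_rep (induced \<delta>) \<and> irreducible_rep (induced \<delta>) \<and> equiv_Gamma2 (induced \<delta>)"
    using rep1 rep2 rep3 irr1 irr2 irr3 equiv1 equiv2 equiv3 by blast
  have b3: "induced delta3 b = permB" by (simp add: delta3_def induced_b)
  show "\<exists>\<sigma>. is_rep \<sigma> \<and> \<sigma> a1 = diagA \<and> \<sigma> b = permB"
    using rep3 induced3_a1 b3 by blast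
  show "\<forall>\<sigma>. is_rep \<sigma> \<and> \<sigma> a1 = diagA \<and> \<sigma> b = permB \<longrightarrow> equiv_Gamma2 \<sigma>"
  proof (intro allI impI)
    fix \<sigma> :: "(pt \<Rightarrow> pt) \<Rightarrow> padic2 ^ 3 ^ 3"
    assume h: "is_rep \<sigma> \<and> \<sigma> a1 = diagA \<and> \<sigma> b = permB"
    show "equiv_Gamma2 \<sigma>"
    proof (rule equiv_cong[OF _ equiv3])
      fix g assume "g \<in> A4"
      then show "\<sigma> g = induced delta3 g"
        using agree[OF _ rep3] h induced3_a1 b3 by metis
    qed
  qed
qed

end
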